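(* For every $u,v\in\mathfrak{U}(\mathbb{R})$, $$\int^*Du(x)v(x)\,dx=-\int^*u(x)Dv(x)\,dx+\left[u(x)v(x)\right]_{-\beta}^{\beta},$$ where $[uv]_{-\beta}^{\beta}=u(\beta)v(\beta)-u(-\beta)v(-\beta)$.
   Context: Framework (Λ-limits / nonstandard analysis): $\mathfrak{X}=\mathcal{P}_{fin}(\mathfrak{F}(\mathbb{R},\mathbb{R}))$ directed by inclusion; $\mathbb{R}^*\supset\mathbb{R}$ is a non-Archimedean ordered field of Λ-limits of nets $\mathfrak{X}\to\mathbb{R}$; internal sets/functions, natural extensions $E^*,f^*$, hyperfinite sums are defined via Λ-limits; $\int^*$ is the natural extension of the Lebesgue integral. For $\lambda\in\mathfrak{X}$, $V_\lambda$ is the span of $\lambda$; an internal $u=\lim_{\lambda\uparrow\Lambda}u_\lambda$ is an ultrafunction if $u_\lambda\in V_\lambda$ for all $\lambda$; for a vector space $W$ of real functions, $\widetilde{W}=W^*\cap\{\text{ultrafunctions}\}$. Grid: a positive infinite $\beta\in\mathbb{R}^*$, a hyperfinite $\Gamma=\{\gamma_0<\dots<\gamma_\ell\}\subset\mathbb{R}^*$ with $\gamma_0=-\beta$, $\gamma_\ell=\beta$, $0<\gamma_{j+1}-\gamma_j<\eta$ for a fixed infinitesimal $\eta$, and $\mathbb{R}\subseteq\Gamma$; $\mathbb{I}_j=(\gamma_j,\gamma_{j+1})_{\mathbb{R}^*}$ with characteristic function $\chi_j$. $\mathfrak{U}(\mathbb{R})$: functions $u:[-\beta,\beta]\to\mathbb{R}^*$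 of the form $\sum_{j=0}^{\ell-1}v_j\chi_j$ with $v_j\in\widetilde{\mathcal{C}^1(\mathbb{R})}$, equipped with the $L^2$ inner product $\int^*uv\,dx$. $u(\gamma_j^\pm)$ are the internal one-sided limits at grid points; values at grid points: $u(\gamma_j)=\tfrac12(u(\gamma_j^+)+u(\gamma_j^-))$ for $1\le j\le\ell-1$, $u(-\beta)=u(\gamma_0^+)$, $u(\beta)=u(\gamma_\ell^-)$. For $q\in[-\beta,\beta]$, $\delta_q$ is the unique element of $\mathfrak{U}(\mathbb{R})$ with $\int^*w\delta_q=w(q)$ for all $w\in\mathfrak{U}(\mathbb{R})$. Derivative: for $u=\sum_j v_j\chi_j\in\mathfrak{U}(\mathbb{R})$, $u'$ denotes the piecewise derivative $\sum_j v_j'\chi_j$, $P_{\mathfrak{U}}$ is the orthogonal projection onto $\mathfrak{U}(\mathbb{R})$ in $[L^2]^*$, $\triangle u(\gamma_j)=u(\gamma_j^+)-u(\gamma_j^-)$, and $Du=P_{\mathfrak{U}}u'+\sum_{j=1}^{\ell-1}\triangle u(\gamma_j)\delta_{\gamma_j}$. *)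

theory Defs
  imports "HOL-Analysis.Analysis"
begin

text \<open>Net-level (Lambda-limit) rendering of the ultrafunction framework.
  Index set of nets: finite subsets of F(R,R), represented by the type
  (real => real) set together with the requirement that the net filter is
  concentrated on finite sets.\<close>

type_synonym idx = "(real \<Rightarrow> real) set"

definition fine_ultrafilter :: "idx filter \<Rightarrow> bool" where
  "fine_ultrafilter F \<longleftrightarrow>
     F \<noteq> bot \<and>
     (\<forall>P. eventually P F \<or> eventually (\<lambda>l. \<not> P l) F) \<and>
     eventually finite F \<and>
     (\<forall>\<mu>. finite \<mu> \<longrightarrow> eventually (\<lambda>l. \<mu> \<subseteq> l) F)"

text \<open>The ultrafilter defining the Lambda-limit; two nets have the same
  Lambda-limit iff they agree eventually w.r.t. Lam.\<close>
definition Lam :: "idx filter" where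
  "Lam = (SOME F. fine_ultrafilter F)"

definition fspan :: "(real \<Rightarrow> real) set \<Rightarrow> (real \<Rightarrow> real) set" where
  "fspan S = {f. \<exists>T c. finite T \<and> T \<subseteq> S \<and> f = (\<lambda>x. \<Sum>g\<in>T. c g * g x)}"

definition UU :: "idx \<Rightarrow> (nat \<Rightarrow> real) \<Rightarrow> nat \<Rightarrow> (real \<Rightarrow> real) set" where
  "UU lam \<gamma> l = {f. \<exists>vs. (\<forall>j<l. vs j \<in> fspan lam \<and> vs j C1_differentiable_on UNIV) \<and>
       f = (\<lambda>x. \<Sum>j<l. vs j x * indicator {\<gamma> j<..<\<gamma> (Suc j)} x)}"

text \<open>Integral over [gamma 0, gamma l] = [-beta, beta].\<close>
definition gint :: "(nat \<Rightarrow> real) \<Rightarrow> nat \<Rightarrow> (real \<Rightarrow> real) \<Rightarrow> real" where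
  "gint \<gamma> l f = set_lebesgue_integral lborel {\<gamma> 0..\<gamma> l} f"

definition rlim :: "(real \<Rightarrow> real) \<Rightarrow> real \<Rightarrow> real" where
  "rlim u x = Lim (at_right x) u"

definition llim :: "(real \<Rightarrow> real) \<Rightarrow> real \<Rightarrow> real" where
  "llim u x = Lim (at_left x) u"

definition uval :: "(nat \<Rightarrow> real) \<Rightarrow> nat \<Rightarrow> (real \<Rightarrow> real) \<Rightarrow> real \<Rightarrow> real" where
  "uval \<gamma> l u q =
     (if q = \<gamma> 0 then rlim u q
      else if q = \<gamma> l then llim u q
      else if (\<exists>j. 0 < j \<and> j < l \<and> q = \<gamma> j) then (rlim u q + llim u q) / 2
      else u q)"

definition jump :: "(real \<Rightarrow> real) \<Rightarrow> real \<Rightarrow> real" where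
  "jump u x = rlim u x - llim u x"

definition delta :: "idx \<Rightarrow> (nat \<Rightarrow> real) \<Rightarrow> nat \<Rightarrow> real \<Rightarrow> (real \<Rightarrow> real)" where
  "delta lam \<gamma> l q = (THE d. d \<in> UU lam \<gamma> l \<and>
      (\<forall>w\<in>UU lam \<gamma> l. gint \<gamma> l (\<lambda>x. w x * d x) = uval \<gamma> l w q))"

definition projU :: "idx \<Rightarrow> (nat \<Rightarrow> real) \<Rightarrow> nat \<Rightarrow> (real \<Rightarrow> real) \<Rightarrow> (real \<Rightarrow> real)" where
  "projU lam \<gamma> l w = (THE p. p \<in> UU lam \<gamma> l \<and>
      (\<forall>v\<in>UU lam \<gamma> l. gint \<gamma> l (\<lambda>x. p x * v x) = gint \<gamma> l (\<lambda>x. w x * v x)))"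

text \<open>Piecewise derivative sum_j v_j' chi_j (on each open cell u coincides with v_j).\<close>
definition pderiv :: "(nat \<Rightarrow> real) \<Rightarrow> nat \<Rightarrow> (real \<Rightarrow> real) \<Rightarrow> real \<Rightarrow> real" where
  "pderiv \<gamma> l u x = (\<Sum>j<l. deriv u x * indicator {\<gamma> j<..<\<gamma> (Suc j)} x)"

definition DD :: "idx \<Rightarrow> (nat \<Rightarrow> real) \<Rightarrow> nat \<Rightarrow> (real \<Rightarrow> real) \<Rightarrow> (real \<Rightarrow> real)" where
  "DD lam \<gamma> l u = (\<lambda>x. projU lam \<gamma> l (pderiv \<gamma> l u) x +
      (\<Sum>j\<in>{1..<l}. jump u (\<gamma> j) * delta lam \<gamma> l (\<gamma> j) x))"

definition grid_ok :: "(idx \<Rightarrow> real) \<Rightarrow> (idx \<Rightarrow> real) \<Rightarrow> (idx \<Rightarrow> nat \<Rightarrow> real) \<Rightarrow> (idx \<Rightarrow> nat) \<Rightarrow> bool" where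
  "grid_ok \<beta> \<eta> \<gamma> l \<longleftrightarrow>
     (\<forall>n::nat. eventually (\<lambda>a. real n < \<beta> a) Lam) \<and>
     eventually (\<lambda>a. 0 < \<eta> a) Lam \<and>
     (\<forall>n::nat. eventually (\<lambda>a. \<eta> a < 1 / real (Suc n)) Lam) \<and>
     eventually (\<lambda>a. \<gamma> a 0 = - \<beta> a \<and> \<gamma> a (l a) = \<beta> a \<and>
        (\<forall>j<l a. 0 < \<gamma> a (Suc j) - \<gamma> a j \<and> \<gamma> a (Suc j) - \<gamma> a j < \<eta> a)) Lam \<and>
     (\<forall>r::real. eventually (\<lambda>a. \<exists>j\<le>l a. \<gamma> a j = r) Lam)"

end

theory Submission
  imports Defs
begin


lemma ex_ultra_below:
  fixes F :: "'a filter"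
  assumes F: "F \<noteq> bot"
  shows "\<exists>U\<le>F. U \<noteq> bot \<and> (\<forall>P. eventually P U \<or> eventually (\<lambda>x. \<not> P x) U)"
proof -
  let ?X = "{G. G \<noteq> bot \<and> G \<le> F}"
  let ?R = "{(b, a). a \<noteq> bot \<and> a \<le> b \<and> b \<le> F}"
  have bot_notin_R: "c \<in> Chains ?R \<Longrightarrow> bot \<notin> c" for c
    by (auto simp: Chains_def)
  have [simp]: "Field ?R = ?X"
    by (auto simp: Field_def bot_unique)
  have "\<exists>m\<in>Field ?R. \<forall>a\<in>Field ?R. (m, a) \<in> ?R \<longrightarrow> a = m" (is "\<exists>m\<in>?A. ?B m")
  proof (rule Zorns_po_lemma)
    show "Partial_order ?R"
      by (auto simp: partial_order_on_def preorder_on_def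
          antisym_def refl_on_def trans_def Field_def bot_unique)
    show "\<exists>u\<in>Field ?R. \<forall>a\<in>C. (a, u) \<in> ?R" if C: "C \<in> Chains ?R" for C
    proof (simp, intro exI conjI ballI)
      have Inf_C: "Inf C \<noteq> bot" "Inf C \<le> F" if "C \<noteq> {}"
      proof -
        from C that have "Inf C = bot \<longleftrightarrow> (\<exists>x\<in>C. x = bot)"
          unfolding trivial_limit_def by (intro eventually_Inf_base) (auto simp: Chains_def)
        with C show "Inf C \<noteq> bot"
          by (simp add: bot_notin_R)
        from that obtain x where "x \<in> C" by auto
        with C show "Inf C \<le> F"
          by (auto intro!: Inf_lower2[of x] simp: Chains_def)
      qed
      then have [simp]: "inf F (Inf C) = (if C = {} then F else Inf C)"
        using C by (auto simp add: inf_absorb2)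
      from C show "inf F (Inf C) \<noteq> bot"
        by (simp add: F Inf_C)
      from C show "inf F (Inf C) \<le> F"
        by (simp add: Chains_def Inf_C F)
      with C show "inf F (Inf C) \<le> x" "x \<le> F" if "x \<in> C" for x
        using that  by (auto intro: Inf_lower simp: Chains_def)
    qed
  qed
  then obtain U where U: "U \<in> ?A" "?B U" ..
  have UF: "U \<le> F" and Ub: "U \<noteq> bot" using U(1) by simp_all
  have ult: "eventually P U \<or> eventually (\<lambda>x. \<not> P x) U" for P
  proof (rule disjCI)
    assume nP: "\<not> (\<forall>\<^sub>Fx in U. \<not> P x)"
    have ne: "inf U (principal {x. P x}) \<noteq> bot"
    proof
      assume "inf U (principal {x. P x}) = bot"
      then have "eventually (\<lambda>x. False) (inf U (principal {x. P x}))" by simp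
      then have "eventually (\<lambda>x. x \<in> {x. P x} \<longrightarrow> False) U"
        by (simp only: eventually_inf_principal)
      then show False using nP by simp
    qed
    have m: "inf U (principal {x. P x}) \<in> ?X"
      using ne le_infI1[OF UF] by simp
    have m': "inf U (principal {x. P x}) \<in> Field ?R" using m by simp
    have r: "(U, inf U (principal {x. P x})) \<in> ?R"
      using ne UF by simp
    have "inf U (principal {x. P x}) = U"
      using bspec[OF U(2) m'] r by (rule mp)
    then have "U = inf U (principal {x. P x})" by (rule sym)
    moreover have "eventually P (inf U (principal {x. P x}))"
      unfolding eventually_inf_principal by simp
    ultimately show "eventually P U" by simp
  qed
  show ?thesis using UF Ub ult by blast
qed

definition F0 :: "idx filter" where
  "F0 = (INF \<mu>\<in>{\<mu>. finite \<mu>}. principal {l. finite l \<and> \<mu> \<subseteq> l})"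

lemma ev_F0: "eventually P F0 \<longleftrightarrow> (\<exists>\<mu>. finite \<mu> \<and> (\<forall>l. finite l \<and> \<mu> \<subseteq> l \<longrightarrow> P l))"
  unfolding F0_def
  apply (subst eventually_INF_base)
    apply auto[1]
   apply (rule_tac x="a \<union> b" in bexI)
    apply auto[2]
  apply (auto simp: eventually_principal)
  done

lemma fine_ex: "\<exists>F. fine_ultrafilter F"
proof -
  have "F0 \<noteq> bot"
    unfolding trivial_limit_def ev_F0 by auto
  then obtain U where U: "U \<le> F0" "U \<noteq> bot" "\<forall>P. eventually P U \<or> eventually (\<lambda>x. \<not> P x) U"
    using ex_ultra_below by blast
  have "eventually finite U"
    using U(1) unfolding le_filter_def ev_F0 by auto
  moreover have "finite \<mu> \<Longrightarrow> eventually (\<lambda>l. \<mu> \<subseteq> l) U" for \<mu>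
    using U(1) unfolding le_filter_def ev_F0 by auto
  ultimately show ?thesis using U unfolding fine_ultrafilter_def by blast
qed

lemma Lam_finite: "eventually finite Lam"
  using someI_ex[OF fine_ex] unfolding Lam_def fine_ultrafilter_def by blast


definition gsp :: "'i set \<Rightarrow> ('i \<Rightarrow> 'x \<Rightarrow> real) \<Rightarrow> ('x \<Rightarrow> real) set" where
  "gsp I \<phi> = {f. \<exists>c. f = (\<lambda>x. \<Sum>i\<in>I. c i * \<phi> i x)}"

definition subsp :: "('x \<Rightarrow> real) set \<Rightarrow> bool" where
  "subsp V \<longleftrightarrow> (\<lambda>x. 0) \<in> V \<and> (\<forall>f\<in>V. \<forall>g\<in>V. (\<lambda>x. f x + g x) \<in> V) \<and> (\<forall>c. \<forall>f\<in>V. (\<lambda>x. c * f x) \<in> V)"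

definition bilin :: "(('x \<Rightarrow> real) \<Rightarrow> ('x \<Rightarrow> real) \<Rightarrow> real) \<Rightarrow> ('x \<Rightarrow> real) set \<Rightarrow> bool" where
  "bilin B V \<longleftrightarrow> (\<forall>f\<in>V. \<forall>g\<in>V. \<forall>h\<in>V. B (\<lambda>x. f x + g x) h = B f h + B g h) \<and>
     (\<forall>c. \<forall>f\<in>V. \<forall>h\<in>V. B (\<lambda>x. c * f x) h = c * B f h) \<and> (\<forall>f\<in>V. \<forall>g\<in>V. B f g = B g f)"

definition lin :: "(('x \<Rightarrow> real) \<Rightarrow> real) \<Rightarrow> ('x \<Rightarrow> real) set \<Rightarrow> bool" where
  "lin L V \<longleftrightarrow> (\<forall>f\<in>V. \<forall>g\<in>V. L (\<lambda>x. f x + g x) = L f + L g) \<and> (\<forall>c. \<forall>f\<in>V. L (\<lambda>x. c * f x) = c * L f)"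

definition posdef :: "(('x \<Rightarrow> real) \<Rightarrow> ('x \<Rightarrow> real) \<Rightarrow> real) \<Rightarrow> ('x \<Rightarrow> real) set \<Rightarrow> bool" where
  "posdef B V \<longleftrightarrow> (\<forall>f\<in>V. f \<noteq> (\<lambda>x. 0) \<longrightarrow> B f f > 0)"

lemma subsp_add: "subsp V \<Longrightarrow> f \<in> V \<Longrightarrow> g \<in> V \<Longrightarrow> (\<lambda>x. f x + g x) \<in> V"
  unfolding subsp_def by blast
lemma subsp_sc: "subsp V \<Longrightarrow> f \<in> V \<Longrightarrow> (\<lambda>x. c * f x) \<in> V"
  unfolding subsp_def by blast
lemma subsp_diff: "subsp V \<Longrightarrow> f \<in> V \<Longrightarrow> g \<in> V \<Longrightarrow> (\<lambda>x. f x - c * g x) \<in> V"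
proof -
  assume V: "subsp V" "f \<in> V" "g \<in> V"
  have "(\<lambda>x. (-c) * g x) \<in> V" using V subsp_sc by blast
  then have "(\<lambda>x. f x + (-c) * g x) \<in> V" using V subsp_add[of V f] by blast
  then show ?thesis by simp
qed
lemma subsp_int: "subsp V \<Longrightarrow> subsp W \<Longrightarrow> subsp (V \<inter> W)"
  unfolding subsp_def by blast

lemma gsp_subsp: "subsp (gsp I \<phi>)"
  unfolding subsp_def gsp_def
proof (intro conjI ballI allI)
  show "(\<lambda>x. 0) \<in> {f. \<exists>c. f = (\<lambda>x. \<Sum>i\<in>I. c i * \<phi> i x)}"
    by (auto intro!: exI[of _ "\<lambda>i. 0"])
next
  fix f g assume "f \<in> {f. \<exists>c. f = (\<lambda>x. \<Sum>i\<in>I. c i * \<phi> i x)}" "g \<in> {f. \<exists>c. f = (\<lambda>x. \<Sum>i\<in>I. c i * \<phi> i x)}"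
  then obtain a b where "f = (\<lambda>x. \<Sum>i\<in>I. a i * \<phi> i x)" "g = (\<lambda>x. \<Sum>i\<in>I. b i * \<phi> i x)" by auto
  then show "(\<lambda>x. f x + g x) \<in> {f. \<exists>c. f = (\<lambda>x. \<Sum>i\<in>I. c i * \<phi> i x)}"
    by (auto intro!: exI[of _ "\<lambda>i. a i + b i"] simp: sum.distrib distrib_right)
next
  fix c f assume "f \<in> {f. \<exists>c. f = (\<lambda>x. \<Sum>i\<in>I. c i * \<phi> i x)}"
  then obtain a where "f = (\<lambda>x. \<Sum>i\<in>I. a i * \<phi> i x)" by auto
  then show "(\<lambda>x. c * f x) \<in> {f. \<exists>c. f = (\<lambda>x. \<Sum>i\<in>I. c i * \<phi> i x)}"
    by (auto intro!: exI[of _ "\<lambda>i. c * a i"] simp: sum_distrib_left mult.assoc)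
qed

lemma bilin_mono: "bilin B V \<Longrightarrow> W \<subseteq> V \<Longrightarrow> bilin B W"
  unfolding bilin_def by blast
lemma posdef_mono: "posdef B V \<Longrightarrow> W \<subseteq> V \<Longrightarrow> posdef B W"
  unfolding posdef_def by blast
lemma lin_mono: "lin L V \<Longrightarrow> W \<subseteq> V \<Longrightarrow> lin L W"
  unfolding lin_def by blast

lemma bilin_add1: "bilin B V \<Longrightarrow> f \<in> V \<Longrightarrow> g \<in> V \<Longrightarrow> h \<in> V \<Longrightarrow> B (\<lambda>x. f x + g x) h = B f h + B g h"
  unfolding bilin_def by blast
lemma bilin_sc1: "bilin B V \<Longrightarrow> f \<in> V \<Longrightarrow> h \<in> V \<Longrightarrow> B (\<lambda>x. c * f x) h = c * B f h"
  unfolding bilin_def by blast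
lemma bilin_sym: "bilin B V \<Longrightarrow> f \<in> V \<Longrightarrow> g \<in> V \<Longrightarrow> B f g = B g f"
  unfolding bilin_def by blast
lemma bilin_lin1: "bilin B V \<Longrightarrow> subsp V \<Longrightarrow> f \<in> V \<Longrightarrow> g \<in> V \<Longrightarrow> h \<in> V \<Longrightarrow> B (\<lambda>x. f x + c * g x) h = B f h + c * B g h"
proof -
  assume a: "bilin B V" "subsp V" "f \<in> V" "g \<in> V" "h \<in> V"
  have cg: "(\<lambda>x. c * g x) \<in> V" using subsp_sc[OF a(2) a(4)] .
  have "B (\<lambda>x. f x + c * g x) h = B f h + B (\<lambda>x. c * g x) h"
    using bilin_add1[OF a(1) a(3) cg a(5)] .
  also have "B (\<lambda>x. c * g x) h = c * B g h" using bilin_sc1[OF a(1) a(4) a(5)] .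
  finally show ?thesis .
qed
lemma bilin_lin2: "bilin B V \<Longrightarrow> subsp V \<Longrightarrow> f \<in> V \<Longrightarrow> g \<in> V \<Longrightarrow> h \<in> V \<Longrightarrow> B h (\<lambda>x. f x + c * g x) = B h f + c * B h g"
proof -
  assume a: "bilin B V" "subsp V" "f \<in> V" "g \<in> V" "h \<in> V"
  have "(\<lambda>x. f x + c * g x) \<in> V" using a subsp_add subsp_sc by blast
  then have "B h (\<lambda>x. f x + c * g x) = B (\<lambda>x. f x + c * g x) h" using a bilin_sym by blast
  also have "\<dots> = B f h + c * B g h" using a bilin_lin1 by blast
  also have "B f h = B h f" using bilin_sym[OF a(1) a(3) a(5)] .
  also have "B g h = B h g" using bilin_sym[OF a(1) a(4) a(5)] .
  finally show ?thesis .
qed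
lemma lin_lin: "lin L V \<Longrightarrow> subsp V \<Longrightarrow> f \<in> V \<Longrightarrow> g \<in> V \<Longrightarrow> L (\<lambda>x. f x + c * g x) = L f + c * L g"
  unfolding lin_def by (simp add: subsp_sc)

lemma riesz:
  assumes "finite I"
  shows "\<And>V L. V \<subseteq> gsp I \<phi> \<Longrightarrow> subsp V \<Longrightarrow> bilin B V \<Longrightarrow> posdef B V \<Longrightarrow> lin L V \<Longrightarrow>
     \<exists>d\<in>V. \<forall>w\<in>V. B w d = L w"
  using assms
proof (induction I rule: finite_induct)
  case empty
  have "V \<subseteq> {\<lambda>x. 0}" using empty.prems(1) by (auto simp: gsp_def)
  moreover have z: "(\<lambda>x. 0) \<in> V" using empty.prems(2) by (simp add: subsp_def)
  ultimately have V: "V = {\<lambda>x. 0}" by blast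
  have "B (\<lambda>x. 0) (\<lambda>x. 0) = 0" using bilin_sc1[OF empty.prems(3) z z, of 0] by simp
  moreover have "\<forall>c. \<forall>f\<in>V. L (\<lambda>x. c * f x) = c * L f" using empty.prems(5) unfolding lin_def by blast
  note h = this[rule_format, OF z, of 0]
  then have "L (\<lambda>x. 0) = 0" by simp
  ultimately show ?case using V by auto
next
  case (insert i I')
  note V = insert.prems
  show ?case
  proof (cases "V \<subseteq> gsp I' \<phi>")
    case True
    then show ?thesis using insert.IH V by blast
  next
    case False
    then obtain t0 where t0V: "t0 \<in> V" and t0n: "t0 \<notin> gsp I' \<phi>" by blast
    define V' where "V' = V \<inter> gsp I' \<phi>"
    have V'V: "V' \<subseteq> V" unfolding V'_def by blast
    have sV': "subsp V'" unfolding V'_def using V(2) gsp_subsp subsp_int by blast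
    have bV': "bilin B V'" using bilin_mono V(3) V'V by blast
    have pV': "posdef B V'" using posdef_mono V(4) V'V by blast
    have IH: "\<And>L. lin L V' \<Longrightarrow> \<exists>d\<in>V'. \<forall>w\<in>V'. B w d = L w"
      using insert.IH sV' bV' pV' unfolding V'_def by blast
    obtain c where c: "t0 = (\<lambda>x. \<Sum>k\<in>insert i I'. c k * \<phi> k x)"
      using t0V V(1) unfolding gsp_def by blast
    have ci: "c i \<noteq> 0"
    proof
      assume "c i = 0"
      then have "t0 = (\<lambda>x. \<Sum>k\<in>I'. c k * \<phi> k x)" using c insert.hyps by simp
      then show False using t0n unfolding gsp_def by blast
    qed
    have D: "\<exists>m. (\<lambda>x. w x - m * t0 x) \<in> V'" if wV: "w \<in> V" for w
    proof -
      obtain a where a: "w = (\<lambda>x. \<Sum>k\<in>insert i I'. a k * \<phi> k x)"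
        using wV V(1) unfolding gsp_def by blast
      define m where "m = a i / c i"
      have "(\<lambda>x. w x - m * t0 x) = (\<lambda>x. \<Sum>k\<in>I'. (a k - m * c k) * \<phi> k x)"
      proof
        fix x
        have "w x - m * t0 x = (a i * \<phi> i x + (\<Sum>k\<in>I'. a k * \<phi> k x)) - m * (c i * \<phi> i x + (\<Sum>k\<in>I'. c k * \<phi> k x))"
          using a c insert.hyps by simp
        also have "\<dots> = (\<Sum>k\<in>I'. a k * \<phi> k x) - m * (\<Sum>k\<in>I'. c k * \<phi> k x)"
          using ci unfolding m_def by (simp add: algebra_simps)
        also have "\<dots> = (\<Sum>k\<in>I'. (a k - m * c k) * \<phi> k x)"
          by (simp add: sum_distrib_left sum_subtractf algebra_simps)
        finally show "w x - m * t0 x = (\<Sum>k\<in>I'. (a k - m * c k) * \<phi> k x)" .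
      qed
      then have "(\<lambda>x. w x - m * t0 x) \<in> gsp I' \<phi>" unfolding gsp_def by (intro CollectI exI)
      moreover have "(\<lambda>x. w x - m * t0 x) \<in> V" using subsp_diff[OF V(2) wV t0V] .
      ultimately show ?thesis unfolding V'_def by blast
    qed
    have linB: "lin (\<lambda>w. B w t0) V'"
      unfolding lin_def
    proof (intro conjI ballI allI)
      fix f g assume "f \<in> V'" "g \<in> V'"
      then have "f \<in> V" "g \<in> V" using V'V by auto
      then show "B (\<lambda>x. f x + g x) t0 = B f t0 + B g t0" using bilin_add1[OF V(3) _ _ t0V] by blast
    next
      fix c f assume "f \<in> V'"
      then have "f \<in> V" using V'V by auto
      then show "B (\<lambda>x. c * f x) t0 = c * B f t0" using bilin_sc1[OF V(3) _ t0V] by blast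
    qed
    obtain e where eV': "e \<in> V'" and e: "\<forall>w\<in>V'. B w e = B w t0" using IH[OF linB] by blast
    have eV: "e \<in> V" using eV' V'V by blast
    define t where "t = (\<lambda>x. t0 x + (-1) * e x)"
    have tV: "t \<in> V" unfolding t_def using subsp_add[OF V(2) t0V subsp_sc[OF V(2) eV]] .
    have orth: "B w t = 0" if "w \<in> V'" for w
    proof -
      have wV: "w \<in> V" using that V'V by blast
      have "B w (\<lambda>x. t0 x + (-1) * e x) = B w t0 + (-1) * B w e" by (rule bilin_lin2[OF V(3) V(2) t0V eV wV])
      then have "B w t = B w t0 + (-1) * B w e" unfolding t_def[symmetric] .
      then show ?thesis using e that by simp
    qed
    have tnz: "t \<noteq> (\<lambda>x. 0)"
    proof
      assume "t = (\<lambda>x. 0)"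
      then have "t0 = e" unfolding t_def by (auto simp: fun_eq_iff)
      then show False using eV' t0n unfolding V'_def by blast
    qed
    have Btt: "B t t > 0" using V(4) tV tnz unfolding posdef_def by blast
    have linL': "lin L V'" using lin_mono V(5) V'V by blast
    obtain d' where d'V': "d' \<in> V'" and d': "\<forall>w\<in>V'. B w d' = L w" using IH[OF linL'] by blast
    have d'V: "d' \<in> V" using d'V' V'V by blast
    define k where "k = (L t - B t d') / B t t"
    define d where "d = (\<lambda>x. d' x + k * t x)"
    have dV: "d \<in> V" unfolding d_def using V(2) d'V tV subsp_add subsp_sc by blast
    have "\<forall>w\<in>V. B w d = L w"
    proof
      fix w assume wV: "w \<in> V"
      obtain m where m: "(\<lambda>x. w x - m * t0 x) \<in> V'" using D[OF wV] by blast
      define w1 where "w1 = (\<lambda>x. w x - m * t x)"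
      have "w1 = (\<lambda>x. (w x - m * t0 x) + m * e x)" unfolding w1_def t_def by (simp add: algebra_simps)
      then have w1V': "w1 \<in> V'" using subsp_add[OF sV' m subsp_sc[OF sV' eV']] by simp
      have w1V: "w1 \<in> V" using w1V' V'V by blast
      have ww: "w = (\<lambda>x. w1 x + m * t x)" unfolding w1_def by simp
      have "B w d = B w1 d + m * B t d" using ww bilin_lin1[OF V(3) V(2) w1V tV dV] by simp
      also have "B w1 d = B w1 d' + k * B w1 t" unfolding d_def using bilin_lin2[OF V(3) V(2) d'V tV w1V] .
      also have "\<dots> = L w1" using orth[OF w1V'] d' w1V' by simp
      also have "B t d = B t d' + k * B t t" unfolding d_def using bilin_lin2[OF V(3) V(2) d'V tV tV] .
      also have "\<dots> = L t" unfolding k_def using Btt by simp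
      also have "L w1 + m * L t = L w" using ww lin_lin[OF V(5) V(2) w1V tV] by simp
      finally show "B w d = L w" .
    qed
    then show ?thesis using dV by blast
  qed
qed

lemma riesz_unique:
  assumes "subsp V" "bilin B V" "posdef B V" "d1 \<in> V" "d2 \<in> V"
    "\<forall>w\<in>V. B w d1 = L w" "\<forall>w\<in>V. B w d2 = L w"
  shows "d1 = d2"
proof -
  define w where "w = (\<lambda>x. d1 x + (-1) * d2 x)"
  have wV: "w \<in> V" unfolding w_def using subsp_add[OF assms(1,4) subsp_sc[OF assms(1,5)]] .
  have "B w (\<lambda>x. d1 x + (-1) * d2 x) = B w d1 + (-1) * B w d2" by (rule bilin_lin2[OF assms(2,1,4,5) wV])
  then have "B w w = B w d1 + (-1) * B w d2" unfolding w_def[symmetric] .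
  then have "B w w = 0" using assms(6,7) wV by simp
  then have "w = (\<lambda>x. 0)" using assms(3) wV unfolding posdef_def by force
  then show ?thesis unfolding w_def by (auto simp: fun_eq_iff)
qed

lemma riesz_the:
  assumes "finite I" "V \<subseteq> gsp I \<phi>" "subsp V" "bilin B V" "posdef B V" "lin L V"
  shows "(THE d. d \<in> V \<and> (\<forall>w\<in>V. B w d = L w)) \<in> V \<and>
     (\<forall>w\<in>V. B w (THE d. d \<in> V \<and> (\<forall>w\<in>V. B w d = L w)) = L w)"
proof -
  obtain d where d: "d \<in> V" "\<forall>w\<in>V. B w d = L w" using riesz[OF assms(1-6)] by blast
  have "(THE d. d \<in> V \<and> (\<forall>w\<in>V. B w d = L w)) = d"
    apply (rule the_equality)
    using d apply blast
    using riesz_unique[OF assms(3,4,5)] d by blast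
  then show ?thesis using d by simp
qed


locale grid =
  fixes \<gamma> :: "nat \<Rightarrow> real" and l :: nat
  assumes gm: "\<And>j. j < l \<Longrightarrow> \<gamma> j < \<gamma> (Suc j)"
begin

definition pw :: "(nat \<Rightarrow> real \<Rightarrow> real) \<Rightarrow> real \<Rightarrow> real" where
  "pw h = (\<lambda>x. \<Sum>j<l. h j x * indicator {\<gamma> j<..<\<gamma> (Suc j)} x)"

lemma gle: "i \<le> j \<Longrightarrow> j \<le> l \<Longrightarrow> \<gamma> i \<le> \<gamma> j"
proof (induction j)
  case 0 then show ?case by simp
next
  case (Suc j)
  show ?case
  proof (cases "i = Suc j")
    case False
    then have "\<gamma> i \<le> \<gamma> j" using Suc by simp
    moreover have "\<gamma> j < \<gamma> (Suc j)" using gm Suc.prems by simp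
    ultimately show ?thesis by simp
  qed simp
qed

lemma glt: "i < j \<Longrightarrow> j \<le> l \<Longrightarrow> \<gamma> i < \<gamma> j"
proof -
  assume a: "i < j" "j \<le> l"
  then obtain k where k: "j = Suc k" by (cases j) auto
  have "\<gamma> i \<le> \<gamma> k" using a k gle by simp
  moreover have "\<gamma> k < \<gamma> j" using gm a k by simp
  ultimately show ?thesis by simp
qed

lemma cell_disj:
  assumes "j < l" "k < l" "x \<in> {\<gamma> j<..<\<gamma> (Suc j)}" "x \<in> {\<gamma> k<..<\<gamma> (Suc k)}"
  shows "j = k"
proof (rule ccontr)
  assume "j \<noteq> k"
  then consider "j < k" | "k < j" by linarith
  then show False
  proof cases
    case 1
    then have "\<gamma> (Suc j) \<le> \<gamma> k" using gle assms by simp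
    then show False using assms by simp
  next
    case 2
    then have "\<gamma> (Suc k) \<le> \<gamma> j" using gle assms by simp
    then show False using assms by simp
  qed
qed

lemma pw_cell: "j < l \<Longrightarrow> x \<in> {\<gamma> j<..<\<gamma> (Suc j)} \<Longrightarrow> pw h x = h j x"
proof -
  assume a: "j < l" "x \<in> {\<gamma> j<..<\<gamma> (Suc j)}"
  have "pw h x = (\<Sum>k<l. if k = j then h j x else 0)"
    unfolding pw_def
  proof (rule sum.cong)
    fix k assume "k \<in> {..<l}"
    then have kl: "k < l" by simp
    show "h k x * indicator {\<gamma> k<..<\<gamma> (Suc k)} x = (if k = j then h j x else 0)"
    proof (cases "k = j")
      case True
      then show ?thesis using a(2) by (simp add: indicator_def)
    next
      case False
      then have "x \<notin> {\<gamma> k<..<\<gamma> (Suc k)}" using cell_disj[OF a(1) kl a(2)] by blast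
      then show ?thesis using False by (simp add: indicator_def)
    qed
  qed simp
  also have "\<dots> = h j x" using a by simp
  finally show ?thesis .
qed

lemma pw_out: "(\<And>j. j < l \<Longrightarrow> x \<notin> {\<gamma> j<..<\<gamma> (Suc j)}) \<Longrightarrow> pw h x = 0"
proof -
  assume a: "\<And>j. j < l \<Longrightarrow> x \<notin> {\<gamma> j<..<\<gamma> (Suc j)}"
  show ?thesis unfolding pw_def
  proof (rule sum.neutral, rule ballI)
    fix j assume "j \<in> {..<l}"
    then have "x \<notin> {\<gamma> j<..<\<gamma> (Suc j)}" using a by simp
    then show "h j x * indicator {\<gamma> j<..<\<gamma> (Suc j)} x = 0" by simp
  qed
qed

lemma pw_mult: "pw h x * pw g x = pw (\<lambda>j x. h j x * g j x) x"
proof (cases "\<exists>j<l. x \<in> {\<gamma> j<..<\<gamma> (Suc j)}")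
  case True
  then obtain j where "j < l" "x \<in> {\<gamma> j<..<\<gamma> (Suc j)}" by blast
  then show ?thesis using pw_cell by simp
next
  case False
  then have "\<And>j. j < l \<Longrightarrow> x \<notin> {\<gamma> j<..<\<gamma> (Suc j)}" by blast
  then show ?thesis using pw_out by simp
qed

lemma pw_lin: "pw h x + c * pw g x = pw (\<lambda>j x. h j x + c * g j x) x"
  unfolding pw_def sum_distrib_left sum.distrib[symmetric] by (intro sum.cong refl) (simp only: distrib_right mult.assoc)

lemma pw_sc: "c * pw g x = pw (\<lambda>j x. c * g j x) x"
  unfolding pw_def sum_distrib_left by (intro sum.cong refl) (simp only: mult.assoc)

lemma cell_int:
  fixes f :: "real \<Rightarrow> real"
  assumes "continuous_on {a..b} f" "a \<le> b"
  shows "set_integrable lborel {a<..<b} f"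
    "set_lebesgue_integral lborel {a<..<b} f = integral {a..b} f"
proof -
  have si: "set_integrable lborel {a..b} f" using borel_integrable_atLeastAtMost'[OF assms(1)] .
  then show "set_integrable lborel {a<..<b} f" by (rule set_integrable_subset) auto
  have "set_lebesgue_integral lborel {a<..<b} f = interval_lebesgue_integral lborel (ereal a) (ereal b) f"
    using interval_integral_Ioo[of "ereal a" "ereal b" f] assms(2) by simp
  also have "\<dots> = set_lebesgue_integral lborel {a..b} f"
    using interval_integral_Icc[OF assms(2)] .
  also have "\<dots> = integral {a..b} f" using set_borel_integral_eq_integral(2)[OF si] .
  finally show "set_lebesgue_integral lborel {a<..<b} f = integral {a..b} f" .
qed

lemma gint_pw:
  assumes "\<And>j. j < l \<Longrightarrow> continuous_on {\<gamma> j..\<gamma> (Suc j)} (h j)"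
  shows "gint \<gamma> l (pw h) = (\<Sum>j<l. integral {\<gamma> j..\<gamma> (Suc j)} (h j))"
proof -
  have eq: "indicator {\<gamma> 0..\<gamma> l} x *\<^sub>R pw h x = (\<Sum>j<l. indicator {\<gamma> j<..<\<gamma> (Suc j)} x *\<^sub>R h j x)" for x
  proof -
    have "indicator {\<gamma> 0..\<gamma> l} x * indicator {\<gamma> j<..<\<gamma> (Suc j)} x = (indicator {\<gamma> j<..<\<gamma> (Suc j)} x :: real)"
      if "j < l" for j
    proof -
      have "\<gamma> 0 \<le> \<gamma> j" "\<gamma> (Suc j) \<le> \<gamma> l" using gle that by auto
      then show ?thesis by (cases "x \<in> {\<gamma> j<..<\<gamma> (Suc j)}") (simp_all add: indicator_def)
    qed
    note ii = this
    show ?thesis unfolding pw_def real_scaleR_def sum_distrib_left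
    proof (rule sum.cong[OF refl])
      fix j assume "j \<in> {..<l}"
      then have "indicator {\<gamma> 0..\<gamma> l} x * indicator {\<gamma> j<..<\<gamma> (Suc j)} x = (indicator {\<gamma> j<..<\<gamma> (Suc j)} x :: real)"
        using ii by simp
      then show "indicator {\<gamma> 0..\<gamma> l} x * (h j x * indicator {\<gamma> j<..<\<gamma> (Suc j)} x) = indicator {\<gamma> j<..<\<gamma> (Suc j)} x * h j x"
        by (metis mult.assoc mult.commute)
    qed
  qed
  have ints: "set_integrable lborel {\<gamma> j<..<\<gamma> (Suc j)} (h j)"
    "set_lebesgue_integral lborel {\<gamma> j<..<\<gamma> (Suc j)} (h j) = integral {\<gamma> j..\<gamma> (Suc j)} (h j)"
    if "j < l" for j
    using cell_int[OF assms[OF that]] gm[OF that] by auto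
  have "gint \<gamma> l (pw h) = (LINT x|lborel. (\<Sum>j<l. indicator {\<gamma> j<..<\<gamma> (Suc j)} x *\<^sub>R h j x))"
    unfolding gint_def set_lebesgue_integral_def eq ..
  also have "\<dots> = (\<Sum>j<l. LINT x|lborel. indicator {\<gamma> j<..<\<gamma> (Suc j)} x *\<^sub>R h j x)"
    by (rule Bochner_Integration.integral_sum) (use ints(1) in \<open>auto simp: set_integrable_def\<close>)
  also have "\<dots> = (\<Sum>j<l. integral {\<gamma> j..\<gamma> (Suc j)} (h j))"
    using ints(2) by (auto simp: set_lebesgue_integral_def)
  finally show ?thesis .
qed

end


lemma C1_facts:
  fixes f :: "real \<Rightarrow> real"
  assumes "f C1_differentiable_on UNIV"
  shows "continuous_on UNIV f" "continuous_on UNIV (deriv f)" "\<And>x. (f has_real_derivative deriv f x) (at x)"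
proof -
  obtain D where D: "\<And>x. (f has_vector_derivative D x) (at x)" "continuous_on UNIV D"
    using assms unfolding C1_differentiable_on_def by blast
  have d: "(f has_real_derivative D x) (at x)" for x
    using D(1) has_real_derivative_iff_has_vector_derivative by blast
  then have "deriv f x = D x" for x by (rule DERIV_imp_deriv)
  then have "deriv f = D" by (rule ext)
  then show "continuous_on UNIV (deriv f)" "\<And>x. (f has_real_derivative deriv f x) (at x)"
    using D(2) d by auto
  show "continuous_on UNIV f"
    using d by (meson DERIV_isCont continuous_at_imp_continuous_on)
qed

context grid
begin

lemma rlim_pw:
  assumes "j < l" "continuous_on UNIV (h j)"
  shows "rlim (pw h) (\<gamma> j) = h j (\<gamma> j)"
proof -
  have "isCont (h j) (\<gamma> j)" using assms(2) by (simp add: continuous_on_eq_continuous_at)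
  then have "(h j \<longlongrightarrow> h j (\<gamma> j)) (at (\<gamma> j))" by (simp add: isCont_def)
  then have t: "(h j \<longlongrightarrow> h j (\<gamma> j)) (at_right (\<gamma> j))" by (rule tendsto_within_subset) simp
  have "eventually (\<lambda>y. y \<in> {\<gamma> j<..<\<gamma> (Suc j)}) (at_right (\<gamma> j))"
    using eventually_at_right_real gm[OF assms(1)] by blast
  then have "eventually (\<lambda>y. h j y = pw h y) (at_right (\<gamma> j))"
    by (rule eventually_mono) (simp add: pw_cell[OF assms(1)])
  then have "(pw h \<longlongrightarrow> h j (\<gamma> j)) (at_right (\<gamma> j))" using t tendsto_cong by blast
  then show ?thesis unfolding rlim_def by (rule tendsto_Lim[rotated]) (rule trivial_limit_at_right_real)
qed

lemma llim_pw:
  assumes "j < l" "continuous_on UNIV (h j)"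
  shows "llim (pw h) (\<gamma> (Suc j)) = h j (\<gamma> (Suc j))"
proof -
  have "isCont (h j) (\<gamma> (Suc j))" using assms(2) by (simp add: continuous_on_eq_continuous_at)
  then have "(h j \<longlongrightarrow> h j (\<gamma> (Suc j))) (at (\<gamma> (Suc j)))" by (simp add: isCont_def)
  then have t: "(h j \<longlongrightarrow> h j (\<gamma> (Suc j))) (at_left (\<gamma> (Suc j)))" by (rule tendsto_within_subset) simp
  have "eventually (\<lambda>y. y \<in> {\<gamma> j<..<\<gamma> (Suc j)}) (at_left (\<gamma> (Suc j)))"
    using eventually_at_left_real gm[OF assms(1)] by blast
  then have "eventually (\<lambda>y. h j y = pw h y) (at_left (\<gamma> (Suc j)))"
    by (rule eventually_mono) (simp add: pw_cell[OF assms(1)])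
  then have "(pw h \<longlongrightarrow> h j (\<gamma> (Suc j))) (at_left (\<gamma> (Suc j)))" using t tendsto_cong by blast
  then show ?thesis unfolding llim_def by (rule tendsto_Lim[rotated]) (rule trivial_limit_at_left_real)
qed

lemma uval_int:
  assumes "0 < j" "j < l" "\<And>k. k < l \<Longrightarrow> continuous_on UNIV (h k)"
  shows "uval \<gamma> l (pw h) (\<gamma> j) = (h j (\<gamma> j) + h (j - 1) (\<gamma> j)) / 2"
proof -
  have n0: "\<gamma> j \<noteq> \<gamma> 0" using glt[of 0 j] assms by simp
  have nl: "\<gamma> j \<noteq> \<gamma> l" using glt[of j l] assms by simp
  have r: "rlim (pw h) (\<gamma> j) = h j (\<gamma> j)" using rlim_pw assms by blast
  have "llim (pw h) (\<gamma> (Suc (j - 1))) = h (j - 1) (\<gamma> (Suc (j - 1)))"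
    using llim_pw[of "j - 1" h] assms by simp
  then have lq: "llim (pw h) (\<gamma> j) = h (j - 1) (\<gamma> j)" using assms(1) by simp
  show ?thesis unfolding uval_def using n0 nl assms(1,2) r lq by auto
qed

lemma uval_left:
  assumes "0 < l" "\<And>k. k < l \<Longrightarrow> continuous_on UNIV (h k)"
  shows "uval \<gamma> l (pw h) (\<gamma> 0) = h 0 (\<gamma> 0)"
  unfolding uval_def using rlim_pw[of 0 h] assms by simp

lemma uval_right:
  assumes "0 < l" "\<And>k. k < l \<Longrightarrow> continuous_on UNIV (h k)"
  shows "uval \<gamma> l (pw h) (\<gamma> l) = h (l - 1) (\<gamma> l)"
proof -
  have nl: "\<gamma> l \<noteq> \<gamma> 0" using glt[of 0 l] assms by simp
  have "llim (pw h) (\<gamma> (Suc (l - 1))) = h (l - 1) (\<gamma> (Suc (l - 1)))"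
    using llim_pw[of "l - 1" h] assms by simp
  then show ?thesis unfolding uval_def using nl assms(1) by simp
qed

lemma jump_int:
  assumes "0 < j" "j < l" "\<And>k. k < l \<Longrightarrow> continuous_on UNIV (h k)"
  shows "jump (pw h) (\<gamma> j) = h j (\<gamma> j) - h (j - 1) (\<gamma> j)"
proof -
  have r: "rlim (pw h) (\<gamma> j) = h j (\<gamma> j)" using rlim_pw assms by blast
  have "llim (pw h) (\<gamma> (Suc (j - 1))) = h (j - 1) (\<gamma> (Suc (j - 1)))"
    using llim_pw[of "j - 1" h] assms by simp
  then have lq: "llim (pw h) (\<gamma> j) = h (j - 1) (\<gamma> j)" using assms(1) by simp
  show ?thesis unfolding jump_def using r lq by simp
qed

lemma pderiv_pw: "pderiv \<gamma> l (pw h) = pw (\<lambda>j. deriv (h j))"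
proof
  fix x
  show "pderiv \<gamma> l (pw h) x = pw (\<lambda>j. deriv (h j)) x"
    unfolding pderiv_def pw_def[of "\<lambda>j. deriv (h j)"]
  proof (rule sum.cong[OF refl])
    fix j assume "j \<in> {..<l}"
    then have jl: "j < l" by simp
    show "deriv (pw h) x * indicator {\<gamma> j<..<\<gamma> (Suc j)} x = deriv (h j) x * indicator {\<gamma> j<..<\<gamma> (Suc j)} x"
    proof (cases "x \<in> {\<gamma> j<..<\<gamma> (Suc j)}")
      case True
      have "eventually (\<lambda>y. y \<in> {\<gamma> j<..<\<gamma> (Suc j)}) (nhds x)"
        using True by (intro eventually_nhds_in_open) auto
      then have "eventually (\<lambda>y. pw h y = h j y) (nhds x)"
        by (rule eventually_mono) (simp add: pw_cell[OF jl])
      then have "deriv (pw h) x = deriv (h j) x" by (rule deriv_cong_ev) simp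
      then show ?thesis by simp
    qed simp
  qed
qed

end


lemma fspan_gsp: "finite lam \<Longrightarrow> fspan lam = gsp lam (\<lambda>g. g)"
proof
  assume fin: "finite lam"
  show "fspan lam \<subseteq> gsp lam (\<lambda>g. g)"
  proof
    fix f assume "f \<in> fspan lam"
    then obtain T c where T: "finite T" "T \<subseteq> lam" "f = (\<lambda>x. \<Sum>g\<in>T. c g * g x)"
      unfolding fspan_def by blast
    define c' where "c' g = (if g \<in> T then c g else 0)" for g
    have "(\<lambda>x. \<Sum>g\<in>lam. c' g * g x) = f"
    proof
      fix x
      have "(\<Sum>g\<in>lam. c' g * g x) = (\<Sum>g\<in>T. c' g * g x)"
        by (rule sum.mono_neutral_right[OF fin T(2)]) (auto simp: c'_def)
      also have "\<dots> = (\<Sum>g\<in>T. c g * g x)" by (rule sum.cong) (auto simp: c'_def)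
      finally show "(\<Sum>g\<in>lam. c' g * g x) = f x" using T(3) by simp
    qed
    then show "f \<in> gsp lam (\<lambda>g. g)" unfolding gsp_def by blast
  qed
  show "gsp lam (\<lambda>g. g) \<subseteq> fspan lam"
    unfolding gsp_def fspan_def using fin by blast
qed

context grid
begin

definition PW :: "(real \<Rightarrow> real) set" where
  "PW = {f. \<exists>h. (\<forall>j<l. continuous_on UNIV (h j)) \<and> f = pw h}"

definition BB :: "(real \<Rightarrow> real) \<Rightarrow> (real \<Rightarrow> real) \<Rightarrow> real" where
  "BB f g = gint \<gamma> l (\<lambda>x. f x * g x)"

lemma UU_eq: "UU lam \<gamma> l = {f. \<exists>vs. (\<forall>j<l. vs j \<in> fspan lam \<and> vs j C1_differentiable_on UNIV) \<and> f = pw vs}"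
  unfolding UU_def pw_def ..

lemma UU_PW: "UU lam \<gamma> l \<subseteq> PW"
  unfolding UU_eq PW_def using C1_facts(1) by blast

lemma BB_pw:
  assumes "\<And>j. j < l \<Longrightarrow> continuous_on UNIV (h j)" "\<And>j. j < l \<Longrightarrow> continuous_on UNIV (k j)"
  shows "BB (pw h) (pw k) = (\<Sum>j<l. integral {\<gamma> j..\<gamma> (Suc j)} (\<lambda>x. h j x * k j x))"
proof -
  have "(\<lambda>x. pw h x * pw k x) = pw (\<lambda>j x. h j x * k j x)" by (rule ext) (rule pw_mult)
  moreover have "continuous_on {\<gamma> j..\<gamma> (Suc j)} (\<lambda>x. h j x * k j x)" if "j < l" for j
  proof -
    have "continuous_on UNIV (\<lambda>x. h j x * k j x)" using assms[OF that] by (intro continuous_on_mult)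
    then show ?thesis by (rule continuous_on_subset) simp
  qed
  ultimately show ?thesis unfolding BB_def using gint_pw by simp
qed

lemma BB_sym: "BB f g = BB g f"
  unfolding BB_def by (simp add: mult.commute)

lemma integrable_cell: "continuous_on UNIV f \<Longrightarrow> (f :: real \<Rightarrow> real) integrable_on {a..b}"
  by (rule integrable_continuous_interval) (rule continuous_on_subset[of UNIV]; simp)

lemma BB_lin1:
  assumes "f1 \<in> PW" "f2 \<in> PW" "g \<in> PW"
  shows "BB (\<lambda>x. f1 x + c * f2 x) g = BB f1 g + c * BB f2 g"
proof -
  obtain h1 where h1: "\<And>j. j < l \<Longrightarrow> continuous_on UNIV (h1 j)" "f1 = pw h1" using assms(1) unfolding PW_def by blast
  obtain h2 where h2: "\<And>j. j < l \<Longrightarrow> continuous_on UNIV (h2 j)" "f2 = pw h2" using assms(2) unfolding PW_def by blast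
  obtain k where k: "\<And>j. j < l \<Longrightarrow> continuous_on UNIV (k j)" "g = pw k" using assms(3) unfolding PW_def by blast
  have e: "(\<lambda>x. f1 x + c * f2 x) = pw (\<lambda>j x. h1 j x + c * h2 j x)"
    using h1(2) h2(2) by (simp add: fun_eq_iff pw_lin)
  have c: "continuous_on UNIV (\<lambda>x. h1 j x + c * h2 j x)" if "j < l" for j
    using h1(1)[OF that] h2(1)[OF that] by (intro continuous_intros)
  have "BB (\<lambda>x. f1 x + c * f2 x) g = (\<Sum>j<l. integral {\<gamma> j..\<gamma> (Suc j)} (\<lambda>x. (h1 j x + c * h2 j x) * k j x))"
    unfolding e k(2) by (rule BB_pw) (use c k(1) in auto)
  also have "\<dots> = (\<Sum>j<l. integral {\<gamma> j..\<gamma> (Suc j)} (\<lambda>x. h1 j x * k j x) + c * integral {\<gamma> j..\<gamma> (Suc j)} (\<lambda>x. h2 j x * k j x))"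
  proof (rule sum.cong[OF refl])
    fix j assume "j \<in> {..<l}"
    then have jl: "j < l" by simp
    have i1: "(\<lambda>x. h1 j x * k j x) integrable_on {\<gamma> j..\<gamma> (Suc j)}"
      using h1(1)[OF jl] k(1)[OF jl] by (intro integrable_cell continuous_intros)
    have i2: "(\<lambda>x. h2 j x * k j x) integrable_on {\<gamma> j..\<gamma> (Suc j)}"
      using h2(1)[OF jl] k(1)[OF jl] by (intro integrable_cell continuous_intros)
    have i3: "(\<lambda>x. c * (h2 j x * k j x)) integrable_on {\<gamma> j..\<gamma> (Suc j)}"
      using h2(1)[OF jl] k(1)[OF jl] by (intro integrable_cell continuous_intros)
    have "integral {\<gamma> j..\<gamma> (Suc j)} (\<lambda>x. (h1 j x + c * h2 j x) * k j x)
       = integral {\<gamma> j..\<gamma> (Suc j)} (\<lambda>x. h1 j x * k j x + c * (h2 j x * k j x))"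
      by (simp add: algebra_simps)
    also have "\<dots> = integral {\<gamma> j..\<gamma> (Suc j)} (\<lambda>x. h1 j x * k j x) + integral {\<gamma> j..\<gamma> (Suc j)} (\<lambda>x. c * (h2 j x * k j x))"
      by (rule Henstock_Kurzweil_Integration.integral_add[OF i1 i3])
    also have "integral {\<gamma> j..\<gamma> (Suc j)} (\<lambda>x. c * (h2 j x * k j x)) = c * integral {\<gamma> j..\<gamma> (Suc j)} (\<lambda>x. h2 j x * k j x)"
      using integral_mult[OF i2, of c] by simp
    finally show "integral {\<gamma> j..\<gamma> (Suc j)} (\<lambda>x. (h1 j x + c * h2 j x) * k j x) =
        integral {\<gamma> j..\<gamma> (Suc j)} (\<lambda>x. h1 j x * k j x) + c * integral {\<gamma> j..\<gamma> (Suc j)} (\<lambda>x. h2 j x * k j x)" .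
  qed
  also have "\<dots> = BB f1 g + c * BB f2 g"
  proof -
    have b1: "BB f1 g = (\<Sum>j<l. integral {\<gamma> j..\<gamma> (Suc j)} (\<lambda>x. h1 j x * k j x))"
      unfolding h1(2) k(2) by (rule BB_pw[OF h1(1) k(1)])
    have b2: "BB f2 g = (\<Sum>j<l. integral {\<gamma> j..\<gamma> (Suc j)} (\<lambda>x. h2 j x * k j x))"
      unfolding h2(2) k(2) by (rule BB_pw[OF h2(1) k(1)])
    show ?thesis unfolding b1 b2 sum.distrib sum_distrib_left ..
  qed
  finally show ?thesis .
qed

lemma zero_PW: "(\<lambda>x. 0) \<in> PW"
proof -
  have "(\<lambda>x. 0) = pw (\<lambda>j x. 0)" unfolding pw_def by simp
  then show ?thesis unfolding PW_def by (intro CollectI exI[of _ "\<lambda>j x. 0"] conjI allI impI) simp_all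
qed

lemma BB_zero: "BB (\<lambda>x. 0) g = 0"
  unfolding BB_def gint_def by simp

lemma BB_bilin: "bilin BB PW"
  unfolding bilin_def
proof (intro conjI ballI allI)
  fix f g h assume a: "f \<in> PW" "g \<in> PW" "h \<in> PW"
  show "BB (\<lambda>x. f x + g x) h = BB f h + BB g h" using BB_lin1[OF a, of 1] by (simp only: mult_1)
next
  fix c f h assume a: "f \<in> PW" "h \<in> PW"
  show "BB (\<lambda>x. c * f x) h = c * BB f h" using BB_lin1[OF zero_PW a, of c] by (simp only: add_0_left BB_zero)
next
  fix f g show "BB f g = BB g f" by (rule BB_sym)
qed

end


context grid
begin

lemma pw_add: "pw h x + pw g x = pw (\<lambda>j x. h j x + g j x) x"
  using pw_lin[of h x 1 g] by simp

lemma UU_subsp: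
  assumes fin: "finite lam"
  shows "subsp (UU lam \<gamma> l)"
  unfolding subsp_def
proof (intro conjI ballI allI)
  have g: "subsp (gsp lam (\<lambda>g. g))" by (rule gsp_subsp)
  have z: "(\<lambda>x. 0) \<in> fspan lam" using g fspan_gsp[OF fin] unfolding subsp_def by simp
  have "(\<lambda>x. 0) = pw (\<lambda>j x. 0)" unfolding pw_def by simp
  then show "(\<lambda>x. 0) \<in> UU lam \<gamma> l" unfolding UU_eq using z
    by (intro CollectI exI[of _ "\<lambda>j x. 0"]) simp
next
  fix f g assume "f \<in> UU lam \<gamma> l" "g \<in> UU lam \<gamma> l"
  then obtain vs ws where v: "\<forall>j<l. vs j \<in> fspan lam \<and> vs j C1_differentiable_on UNIV" "f = pw vs"
    and w: "\<forall>j<l. ws j \<in> fspan lam \<and> ws j C1_differentiable_on UNIV" "g = pw ws"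
    unfolding UU_eq by blast
  have e: "(\<lambda>x. f x + g x) = pw (\<lambda>j x. vs j x + ws j x)" unfolding v(2) w(2) by (rule ext) (rule pw_add)
  have H: "\<forall>j<l. (\<lambda>x. vs j x + ws j x) \<in> fspan lam \<and> (\<lambda>x. vs j x + ws j x) C1_differentiable_on UNIV"
  proof (intro allI impI conjI)
    fix j assume j: "j < l"
    then have "vs j \<in> gsp lam (\<lambda>g. g)" "ws j \<in> gsp lam (\<lambda>g. g)" using v(1) w(1) j fspan_gsp[OF fin] by simp_all
    then have "(\<lambda>x. vs j x + ws j x) \<in> gsp lam (\<lambda>g. g)" by (rule subsp_add[OF gsp_subsp])
    then show "(\<lambda>x. vs j x + ws j x) \<in> fspan lam" using fspan_gsp[OF fin] by simp
    show "(\<lambda>x. vs j x + ws j x) C1_differentiable_on UNIV" using v(1) w(1) j C1_differentiable_on_add by blast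
  qed
  show "(\<lambda>x. f x + g x) \<in> UU lam \<gamma> l" unfolding UU_eq
    by (intro CollectI exI[of _ "\<lambda>j x. vs j x + ws j x"] conjI) (rule H, rule e)
next
  fix c f assume "f \<in> UU lam \<gamma> l"
  then obtain vs where v: "\<forall>j<l. vs j \<in> fspan lam \<and> vs j C1_differentiable_on UNIV" "f = pw vs"
    unfolding UU_eq by blast
  have e: "(\<lambda>x. c * f x) = pw (\<lambda>j x. c * vs j x)" unfolding v(2) by (rule ext) (rule pw_sc)
  have H: "\<forall>j<l. (\<lambda>x. c * vs j x) \<in> fspan lam \<and> (\<lambda>x. c * vs j x) C1_differentiable_on UNIV"
  proof (intro allI impI conjI)
    fix j assume j: "j < l"
    then have "vs j \<in> gsp lam (\<lambda>g. g)" using v(1) fspan_gsp[OF fin] by simp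
    then have "(\<lambda>x. c * vs j x) \<in> gsp lam (\<lambda>g. g)" by (rule subsp_sc[OF gsp_subsp])
    then show "(\<lambda>x. c * vs j x) \<in> fspan lam" using fspan_gsp[OF fin] by simp
    have "vs j C1_differentiable_on UNIV" using v(1) j by simp
    then show "(\<lambda>x. c * vs j x) C1_differentiable_on UNIV"
      by (rule C1_differentiable_on_mult[OF C1_differentiable_on_const])
  qed
  show "(\<lambda>x. c * f x) \<in> UU lam \<gamma> l" unfolding UU_eq
    by (intro CollectI exI[of _ "\<lambda>j x. c * vs j x"] conjI) (rule H, rule e)
qed

lemma UU_gsp:
  assumes fin: "finite lam"
  shows "UU lam \<gamma> l \<subseteq> gsp ({..<l} \<times> lam) (\<lambda>p x. snd p x * indicator {\<gamma> (fst p)<..<\<gamma> (Suc (fst p))} x)"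
proof
  fix f assume "f \<in> UU lam \<gamma> l"
  then obtain vs where v: "\<forall>j<l. vs j \<in> fspan lam" "f = pw vs"
    unfolding UU_eq by blast
  have "\<forall>j\<in>{..<l}. \<exists>c. vs j = (\<lambda>x. \<Sum>g\<in>lam. c g * g x)"
  proof
    fix j assume "j \<in> {..<l}"
    then have "vs j \<in> gsp lam (\<lambda>g. g)" using v(1) fspan_gsp[OF fin] by simp
    then show "\<exists>c. vs j = (\<lambda>x. \<Sum>g\<in>lam. c g * g x)" unfolding gsp_def by simp
  qed
  then obtain c where c: "\<forall>j\<in>{..<l}. vs j = (\<lambda>x. \<Sum>g\<in>lam. c j g * g x)"
    by (rule bchoice[elim_format]) blast
  have "f x = (\<Sum>p\<in>{..<l} \<times> lam. c (fst p) (snd p) * (snd p x * indicator {\<gamma> (fst p)<..<\<gamma> (Suc (fst p))} x))" for x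
  proof -
    have "f x = (\<Sum>j<l. (\<Sum>g\<in>lam. c j g * g x) * indicator {\<gamma> j<..<\<gamma> (Suc j)} x)"
      unfolding v(2) pw_def using c by simp
    also have "\<dots> = (\<Sum>j<l. \<Sum>g\<in>lam. c j g * (g x * indicator {\<gamma> j<..<\<gamma> (Suc j)} x))"
      by (simp add: sum_distrib_right mult.assoc)
    also have "\<dots> = (\<Sum>(j,g)\<in>{..<l} \<times> lam. c j g * (g x * indicator {\<gamma> j<..<\<gamma> (Suc j)} x))"
      by (rule sum.cartesian_product)
    also have "\<dots> = (\<Sum>p\<in>{..<l} \<times> lam. c (fst p) (snd p) * (snd p x * indicator {\<gamma> (fst p)<..<\<gamma> (Suc (fst p))} x))"
      by (simp add: case_prod_unfold)
    finally show ?thesis .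
  qed
  then show "f \<in> gsp ({..<l} \<times> lam) (\<lambda>p x. snd p x * indicator {\<gamma> (fst p)<..<\<gamma> (Suc (fst p))} x)"
    unfolding gsp_def by (intro CollectI exI[of _ "\<lambda>p. c (fst p) (snd p)"]) (rule ext)
qed

lemma UU_posdef: "posdef BB (UU lam \<gamma> l)"
  unfolding posdef_def
proof (intro ballI impI)
  fix f assume fU: "f \<in> UU lam \<gamma> l" and nz: "f \<noteq> (\<lambda>x. 0)"
  then obtain vs where v: "\<forall>j<l. vs j C1_differentiable_on UNIV" "f = pw vs"
    unfolding UU_eq by blast
  have cv: "\<And>j. j < l \<Longrightarrow> continuous_on UNIV (vs j)" using v(1) C1_facts(1) by blast
  have B: "BB f f = (\<Sum>j<l. integral {\<gamma> j..\<gamma> (Suc j)} (\<lambda>x. vs j x * vs j x))"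
    unfolding v(2) by (rule BB_pw[OF cv cv])
  have cc: "continuous_on UNIV (\<lambda>x. vs j x * vs j x)" if "j < l" for j
    using cv[OF that] by (intro continuous_on_mult)
  have nn: "0 \<le> integral {\<gamma> j..\<gamma> (Suc j)} (\<lambda>x. vs j x * vs j x)" if "j \<in> {..<l}" for j
    using that integrable_cell[OF cc] by (intro integral_nonneg) auto
  have "BB f f \<noteq> 0"
  proof
    assume "BB f f = 0"
    then have s0: "(\<Sum>j<l. integral {\<gamma> j..\<gamma> (Suc j)} (\<lambda>x. vs j x * vs j x)) = 0"
      using B by simp
    have z: "\<forall>j\<in>{..<l}. integral {\<gamma> j..\<gamma> (Suc j)} (\<lambda>x. vs j x * vs j x) = 0"
      by (rule iffD1[OF sum_nonneg_eq_0_iff[of "{..<l}" "\<lambda>j. integral {\<gamma> j..\<gamma> (Suc j)} (\<lambda>x. vs j x * vs j x)", OF finite_lessThan nn] s0])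
    have zero: "vs j x = 0" if "j < l" "x \<in> {\<gamma> j..\<gamma> (Suc j)}" for j x
    proof -
      have hi: "((\<lambda>x. vs j x * vs j x) has_integral 0) {\<gamma> j..\<gamma> (Suc j)}"
      proof -
        have "((\<lambda>x. vs j x * vs j x) has_integral integral {\<gamma> j..\<gamma> (Suc j)} (\<lambda>x. vs j x * vs j x)) {\<gamma> j..\<gamma> (Suc j)}"
          by (rule integrable_integral[OF integrable_cell[OF cc[OF that(1)]]])
        moreover have "integral {\<gamma> j..\<gamma> (Suc j)} (\<lambda>x. vs j x * vs j x) = 0" using z that(1) by simp
        ultimately show ?thesis by simp
      qed
      have c1: "continuous_on (cbox (\<gamma> j) (\<gamma> (Suc j))) (\<lambda>x. vs j x * vs j x)"
        by (rule continuous_on_subset[OF cc[OF that(1)]]) simp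
      have h2: "((\<lambda>x. vs j x * vs j x) has_integral 0) (cbox (\<gamma> j) (\<gamma> (Suc j)))"
        using hi by (simp add: cbox_interval)
      have b: "box (\<gamma> j) (\<gamma> (Suc j)) \<noteq> {}" using gm[OF that(1)] by (simp add: box_real)
      have xin: "x \<in> cbox (\<gamma> j) (\<gamma> (Suc j))" using that(2) by (simp add: cbox_interval)
      have "(\<lambda>x. vs j x * vs j x) x = 0" by (rule has_integral_0_cbox_imp_0[OF c1 _ h2 b xin]) simp
      then show ?thesis by simp
    qed
    have "f = (\<lambda>x. 0)"
    proof
      fix x
      show "f x = 0"
      proof (cases "\<exists>j<l. x \<in> {\<gamma> j<..<\<gamma> (Suc j)}")
        case True
        then obtain j where j: "j < l" "x \<in> {\<gamma> j<..<\<gamma> (Suc j)}" by blast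
        then show ?thesis using v(2) pw_cell zero[of j x] by simp
      next
        case False
        then show ?thesis using v(2) pw_out by blast
      qed
    qed
    then show False using nz by simp
  qed
  moreover have "0 \<le> BB f f" unfolding B by (rule sum_nonneg) (rule nn)
  ultimately show "0 < BB f f" by simp
qed

end


lemma bilin_sum:
  assumes "subsp V" "bilin B V" "finite J" "g \<in> V" "\<forall>j\<in>J. f j \<in> V" "w \<in> V"
  shows "(\<lambda>x. g x + (\<Sum>j\<in>J. c j * f j x)) \<in> V \<and>
    B (\<lambda>x. g x + (\<Sum>j\<in>J. c j * f j x)) w = B g w + (\<Sum>j\<in>J. c j * B (f j) w)"
  using assms(3,5)
proof (induction J rule: finite_induct)
  case empty
  then show ?case using assms(4) by simp
next
  case (insert i J)
  have IH: "(\<lambda>x. g x + (\<Sum>j\<in>J. c j * f j x)) \<in> V"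
    "B (\<lambda>x. g x + (\<Sum>j\<in>J. c j * f j x)) w = B g w + (\<Sum>j\<in>J. c j * B (f j) w)"
    using insert by auto
  have fi: "f i \<in> V" using insert.prems by simp
  have e: "(\<lambda>x. g x + (\<Sum>j\<in>insert i J. c j * f j x)) = (\<lambda>x. (g x + (\<Sum>j\<in>J. c j * f j x)) + c i * f i x)"
    using insert.hyps by (simp add: algebra_simps)
  have m: "(\<lambda>x. (g x + (\<Sum>j\<in>J. c j * f j x)) + c i * f i x) \<in> V"
    using subsp_add[OF assms(1) IH(1) subsp_sc[OF assms(1) fi]] .
  have "B (\<lambda>x. (g x + (\<Sum>j\<in>J. c j * f j x)) + c i * f i x) w = B (\<lambda>x. g x + (\<Sum>j\<in>J. c j * f j x)) w + c i * B (f i) w"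
    using bilin_lin1[OF assms(2,1) IH(1) fi assms(6)] .
  then show ?case unfolding e using m IH(2) insert.hyps by (simp add: algebra_simps)
qed

lemma tele:
  fixes A B :: "nat \<Rightarrow> real"
  shows "(\<Sum>j<Suc m. B j - A j) + (\<Sum>j\<in>{1..<Suc m}. A j - B (j - 1)) = B m - A 0"
proof (induction m)
  case 0 then show ?case by simp
next
  case (Suc m)
  have "(\<Sum>j<Suc (Suc m). B j - A j) = (\<Sum>j<Suc m. B j - A j) + (B (Suc m) - A (Suc m))" by simp
  moreover have "(\<Sum>j\<in>{1..<Suc (Suc m)}. A j - B (j - 1)) = (\<Sum>j\<in>{1..<Suc m}. A j - B (j - 1)) + (A (Suc m) - B m)"
    by simp
  ultimately show ?case using Suc.IH by simp
qed

context grid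
begin

lemma UU_bilin: "bilin BB (UU lam \<gamma> l)"
  by (rule bilin_mono[OF BB_bilin UU_PW])

lemma lin_uval:
  assumes "0 < j" "j < l"
  shows "lin (\<lambda>w. uval \<gamma> l w (\<gamma> j)) (UU lam \<gamma> l)"
  unfolding lin_def
proof (intro conjI ballI allI)
  fix f g assume "f \<in> UU lam \<gamma> l" "g \<in> UU lam \<gamma> l"
  then have "f \<in> PW" "g \<in> PW" using UU_PW by auto
  then obtain h k where h: "\<And>j. j < l \<Longrightarrow> continuous_on UNIV (h j)" "f = pw h"
    and k: "\<And>j. j < l \<Longrightarrow> continuous_on UNIV (k j)" "g = pw k"
    unfolding PW_def by blast
  have e: "(\<lambda>x. f x + g x) = pw (\<lambda>j x. h j x + k j x)" unfolding h(2) k(2) by (rule ext) (rule pw_add)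
  have c: "\<And>j. j < l \<Longrightarrow> continuous_on UNIV (\<lambda>x. h j x + k j x)"
    using h(1) k(1) by (intro continuous_on_add)
  have u1: "uval \<gamma> l f (\<gamma> j) = (h j (\<gamma> j) + h (j - 1) (\<gamma> j)) / 2"
    unfolding h(2) by (rule uval_int[OF assms h(1)])
  have u2: "uval \<gamma> l g (\<gamma> j) = (k j (\<gamma> j) + k (j - 1) (\<gamma> j)) / 2"
    unfolding k(2) by (rule uval_int[OF assms k(1)])
  have u3: "uval \<gamma> l (\<lambda>x. f x + g x) (\<gamma> j) = ((h j (\<gamma> j) + k j (\<gamma> j)) + (h (j - 1) (\<gamma> j) + k (j - 1) (\<gamma> j))) / 2"
    unfolding e using uval_int[OF assms c] by simp
  show "uval \<gamma> l (\<lambda>x. f x + g x) (\<gamma> j) = uval \<gamma> l f (\<gamma> j) + uval \<gamma> l g (\<gamma> j)"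
    unfolding u1 u2 u3 by (simp add: field_simps)
next
  fix c f assume "f \<in> UU lam \<gamma> l"
  then have "f \<in> PW" using UU_PW by auto
  then obtain h where h: "\<And>j. j < l \<Longrightarrow> continuous_on UNIV (h j)" "f = pw h"
    unfolding PW_def by blast
  have e: "(\<lambda>x. c * f x) = pw (\<lambda>j x. c * h j x)" unfolding h(2) by (rule ext) (rule pw_sc)
  have cc: "\<And>j. j < l \<Longrightarrow> continuous_on UNIV (\<lambda>x. c * h j x)"
    using h(1) by (intro continuous_on_mult continuous_on_const)
  have u1: "uval \<gamma> l f (\<gamma> j) = (h j (\<gamma> j) + h (j - 1) (\<gamma> j)) / 2"
    unfolding h(2) by (rule uval_int[OF assms h(1)])
  have u3: "uval \<gamma> l (\<lambda>x. c * f x) (\<gamma> j) = (c * h j (\<gamma> j) + c * h (j - 1) (\<gamma> j)) / 2"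
    unfolding e using uval_int[OF assms cc] by simp
  show "uval \<gamma> l (\<lambda>x. c * f x) (\<gamma> j) = c * uval \<gamma> l f (\<gamma> j)"
    unfolding u1 u3 by (simp add: distrib_left)
qed

lemma lin_BB:
  assumes wd: "wd \<in> PW"
  shows "lin (\<lambda>v. BB wd v) (UU lam \<gamma> l)"
  unfolding lin_def
proof (intro conjI ballI allI)
  fix f g assume "f \<in> UU lam \<gamma> l" "g \<in> UU lam \<gamma> l"
  then have fg: "f \<in> PW" "g \<in> PW" using UU_PW by auto
  have "BB wd (\<lambda>x. f x + g x) = BB (\<lambda>x. f x + g x) wd" by (rule BB_sym)
  also have "\<dots> = BB f wd + BB g wd" by (rule bilin_add1[OF BB_bilin fg wd])
  also have "\<dots> = BB wd f + BB wd g" using BB_sym by simp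
  finally show "BB wd (\<lambda>x. f x + g x) = BB wd f + BB wd g" .
next
  fix c f assume "f \<in> UU lam \<gamma> l"
  then have fg: "f \<in> PW" using UU_PW by auto
  have "BB wd (\<lambda>x. c * f x) = BB (\<lambda>x. c * f x) wd" by (rule BB_sym)
  also have "\<dots> = c * BB f wd" by (rule bilin_sc1[OF BB_bilin fg wd])
  also have "\<dots> = c * BB wd f" using BB_sym by simp
  finally show "BB wd (\<lambda>x. c * f x) = c * BB wd f" .
qed

lemma delta_prop:
  assumes fin: "finite lam" and j: "0 < j" "j < l"
  shows "delta lam \<gamma> l (\<gamma> j) \<in> UU lam \<gamma> l \<and>
    (\<forall>w\<in>UU lam \<gamma> l. BB w (delta lam \<gamma> l (\<gamma> j)) = uval \<gamma> l w (\<gamma> j))"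
proof -
  have fI: "finite ({..<l} \<times> lam)" using fin by simp
  have R: "(THE d. d \<in> UU lam \<gamma> l \<and> (\<forall>w\<in>UU lam \<gamma> l. BB w d = uval \<gamma> l w (\<gamma> j))) \<in> UU lam \<gamma> l \<and>
    (\<forall>w\<in>UU lam \<gamma> l. BB w (THE d. d \<in> UU lam \<gamma> l \<and> (\<forall>w\<in>UU lam \<gamma> l. BB w d = uval \<gamma> l w (\<gamma> j))) = uval \<gamma> l w (\<gamma> j))"
    by (rule riesz_the[OF fI UU_gsp[OF fin] UU_subsp[OF fin] UU_bilin UU_posdef lin_uval[OF j]])
  have E: "delta lam \<gamma> l (\<gamma> j) = (THE d. d \<in> UU lam \<gamma> l \<and> (\<forall>w\<in>UU lam \<gamma> l. BB w d = uval \<gamma> l w (\<gamma> j)))"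
    unfolding delta_def BB_def ..
  show ?thesis unfolding E by (rule R)
qed

lemma projU_prop:
  assumes fin: "finite lam" and wd: "wd \<in> PW"
  shows "projU lam \<gamma> l wd \<in> UU lam \<gamma> l \<and>
    (\<forall>v\<in>UU lam \<gamma> l. BB (projU lam \<gamma> l wd) v = BB wd v)"
proof -
  have fI: "finite ({..<l} \<times> lam)" using fin by simp
  have R: "(THE p. p \<in> UU lam \<gamma> l \<and> (\<forall>v\<in>UU lam \<gamma> l. BB v p = BB wd v)) \<in> UU lam \<gamma> l \<and>
    (\<forall>v\<in>UU lam \<gamma> l. BB v (THE p. p \<in> UU lam \<gamma> l \<and> (\<forall>v\<in>UU lam \<gamma> l. BB v p = BB wd v)) = BB wd v)"
    by (rule riesz_the[OF fI UU_gsp[OF fin] UU_subsp[OF fin] UU_bilin UU_posdef lin_BB[OF wd]])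
  have P: "(gint \<gamma> l (\<lambda>x. p x * v x) = gint \<gamma> l (\<lambda>x. wd x * v x)) = (BB v p = BB wd v)" for p v
    unfolding BB_def by (simp add: mult.commute)
  have E: "projU lam \<gamma> l wd = (THE p. p \<in> UU lam \<gamma> l \<and> (\<forall>v\<in>UU lam \<gamma> l. BB v p = BB wd v))"
    unfolding projU_def P ..
  have "\<forall>v\<in>UU lam \<gamma> l. BB (projU lam \<gamma> l wd) v = BB v (projU lam \<gamma> l wd)" using BB_sym by simp
  then show ?thesis unfolding E using R by simp
qed

end


lemma ftc_prod:
  fixes f g :: "real \<Rightarrow> real"
  assumes ab: "a \<le> b" and df: "\<And>x. (f has_real_derivative deriv f x) (at x)"
    and dg: "\<And>x. (g has_real_derivative deriv g x) (at x)"
    and cf: "continuous_on UNIV f" "continuous_on UNIV (deriv f)"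
    and cg: "continuous_on UNIV g" "continuous_on UNIV (deriv g)"
  shows "integral {a..b} (\<lambda>x. deriv f x * g x) + integral {a..b} (\<lambda>x. deriv g x * f x) = f b * g b - f a * g a"
proof -
  have d: "((\<lambda>x. f x * g x) has_vector_derivative (deriv f x * g x + deriv g x * f x)) (at x within {a..b})" for x
  proof -
    have "((\<lambda>x. f x * g x) has_real_derivative (deriv f x * g x + deriv g x * f x)) (at x)"
      by (rule DERIV_mult[OF df dg])
    then have "((\<lambda>x. f x * g x) has_real_derivative (deriv f x * g x + deriv g x * f x)) (at x within {a..b})"
      by (rule has_field_derivative_at_within)
    then show ?thesis using has_real_derivative_iff_has_vector_derivative by blast
  qed
  have "((\<lambda>x. deriv f x * g x + deriv g x * f x) has_integral (f b * g b - f a * g a)) {a..b}"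
    by (rule fundamental_theorem_of_calculus[OF ab d])
  then have I: "integral {a..b} (\<lambda>x. deriv f x * g x + deriv g x * f x) = f b * g b - f a * g a"
    by (rule integral_unique)
  have i1: "(\<lambda>x. deriv f x * g x) integrable_on {a..b}"
  proof (rule integrable_continuous_interval)
    have "continuous_on UNIV (\<lambda>x. deriv f x * g x)" using cf cg by (intro continuous_on_mult)
    then show "continuous_on {a..b} (\<lambda>x. deriv f x * g x)" by (rule continuous_on_subset) simp
  qed
  have i2: "(\<lambda>x. deriv g x * f x) integrable_on {a..b}"
  proof (rule integrable_continuous_interval)
    have "continuous_on UNIV (\<lambda>x. deriv g x * f x)" using cf cg by (intro continuous_on_mult)
    then show "continuous_on {a..b} (\<lambda>x. deriv g x * f x)" by (rule continuous_on_subset) simp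
  qed
  show ?thesis using I Henstock_Kurzweil_Integration.integral_add[OF i1 i2] by simp
qed

context grid
begin

lemma side:
  assumes fin: "finite lam" and aU: "pw a \<in> UU lam \<gamma> l" "pw b \<in> UU lam \<gamma> l"
    and ca: "\<And>j. j < l \<Longrightarrow> continuous_on UNIV (a j)" "\<And>j. j < l \<Longrightarrow> continuous_on UNIV (deriv (a j))"
    "\<And>j. j < l \<Longrightarrow> continuous_on UNIV (b j)"
  shows "BB (DD lam \<gamma> l (pw a)) (pw b) = (\<Sum>j<l. integral {\<gamma> j..\<gamma> (Suc j)} (\<lambda>x. deriv (a j) x * b j x))
     + (\<Sum>j\<in>{1..<l}. (a j (\<gamma> j) - a (j - 1) (\<gamma> j)) * ((b j (\<gamma> j) + b (j - 1) (\<gamma> j)) / 2))"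
proof -
  define P where "P = projU lam \<gamma> l (pderiv \<gamma> l (pw a))"
  have pd: "pderiv \<gamma> l (pw a) = pw (\<lambda>j. deriv (a j))" by (rule pderiv_pw)
  have H: "\<forall>j<l. continuous_on UNIV (deriv (a j))" using ca(2) by blast
  have pdPW: "pderiv \<gamma> l (pw a) \<in> PW" unfolding pd PW_def
    by (intro CollectI exI[of _ "\<lambda>j. deriv (a j)"] conjI) (rule H, rule refl)
  have PP: "P \<in> UU lam \<gamma> l" "\<forall>y\<in>UU lam \<gamma> l. BB P y = BB (pderiv \<gamma> l (pw a)) y"
    using projU_prop[OF fin pdPW] unfolding P_def by auto
  have dl: "\<forall>j\<in>{1..<l}. delta lam \<gamma> l (\<gamma> j) \<in> UU lam \<gamma> l" using delta_prop[OF fin] by auto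
  have DDe: "DD lam \<gamma> l (pw a) = (\<lambda>x. P x + (\<Sum>j\<in>{1..<l}. jump (pw a) (\<gamma> j) * delta lam \<gamma> l (\<gamma> j) x))"
    unfolding DD_def P_def ..
  have "BB (DD lam \<gamma> l (pw a)) (pw b) = BB P (pw b) + (\<Sum>j\<in>{1..<l}. jump (pw a) (\<gamma> j) * BB (delta lam \<gamma> l (\<gamma> j)) (pw b))"
    unfolding DDe by (rule bilin_sum[OF UU_subsp[OF fin] UU_bilin finite_atLeastLessThan PP(1) dl aU(2), where c="\<lambda>j. jump (pw a) (\<gamma> j)", THEN conjunct2])
  also have "BB P (pw b) = (\<Sum>j<l. integral {\<gamma> j..\<gamma> (Suc j)} (\<lambda>x. deriv (a j) x * b j x))"
  proof -
    have "BB P (pw b) = BB (pw (\<lambda>j. deriv (a j))) (pw b)" using PP(2) aU(2) pd by simp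
    also have "\<dots> = (\<Sum>j<l. integral {\<gamma> j..\<gamma> (Suc j)} (\<lambda>x. deriv (a j) x * b j x))"
      by (rule BB_pw[OF ca(2) ca(3)])
    finally show ?thesis .
  qed
  also have "(\<Sum>j\<in>{1..<l}. jump (pw a) (\<gamma> j) * BB (delta lam \<gamma> l (\<gamma> j)) (pw b))
      = (\<Sum>j\<in>{1..<l}. (a j (\<gamma> j) - a (j - 1) (\<gamma> j)) * ((b j (\<gamma> j) + b (j - 1) (\<gamma> j)) / 2))"
  proof (rule sum.cong[OF refl])
    fix j assume "j \<in> {1..<l}"
    then have j: "0 < j" "j < l" by auto
    have "BB (delta lam \<gamma> l (\<gamma> j)) (pw b) = BB (pw b) (delta lam \<gamma> l (\<gamma> j))" by (rule BB_sym)
    also have "\<dots> = uval \<gamma> l (pw b) (\<gamma> j)" using delta_prop[OF fin j] aU(2) by blast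
    also have "\<dots> = (b j (\<gamma> j) + b (j - 1) (\<gamma> j)) / 2" by (rule uval_int[OF j ca(3)])
    finally show "jump (pw a) (\<gamma> j) * BB (delta lam \<gamma> l (\<gamma> j)) (pw b) =
        (a j (\<gamma> j) - a (j - 1) (\<gamma> j)) * ((b j (\<gamma> j) + b (j - 1) (\<gamma> j)) / 2)"
      using jump_int[OF j ca(1)] by simp
  qed
  finally show ?thesis .
qed

lemma main_pt:
  assumes fin: "finite lam" and l0: "0 < l" and uU: "u \<in> UU lam \<gamma> l" and vU: "v \<in> UU lam \<gamma> l"
  shows "gint \<gamma> l (\<lambda>x. DD lam \<gamma> l u x * v x) =
    - gint \<gamma> l (\<lambda>x. u x * DD lam \<gamma> l v x)
    + (uval \<gamma> l u (\<gamma> l) * uval \<gamma> l v (\<gamma> l) - uval \<gamma> l u (\<gamma> 0) * uval \<gamma> l v (\<gamma> 0))"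
proof -
  obtain vs where vs: "\<forall>j<l. vs j \<in> fspan lam \<and> vs j C1_differentiable_on UNIV" "u = pw vs"
    using uU unfolding UU_eq by blast
  obtain ws where ws: "\<forall>j<l. ws j \<in> fspan lam \<and> ws j C1_differentiable_on UNIV" "v = pw ws"
    using vU unfolding UU_eq by blast
  have cv: "\<And>j. j < l \<Longrightarrow> continuous_on UNIV (vs j)" "\<And>j. j < l \<Longrightarrow> continuous_on UNIV (deriv (vs j))"
    "\<And>j x. j < l \<Longrightarrow> (vs j has_real_derivative deriv (vs j) x) (at x)"
    using vs(1) C1_facts by blast+
  have cw: "\<And>j. j < l \<Longrightarrow> continuous_on UNIV (ws j)" "\<And>j. j < l \<Longrightarrow> continuous_on UNIV (deriv (ws j))"
    "\<And>j x. j < l \<Longrightarrow> (ws j has_real_derivative deriv (ws j) x) (at x)"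
    using ws(1) C1_facts by blast+
  have uU': "pw vs \<in> UU lam \<gamma> l" and vU': "pw ws \<in> UU lam \<gamma> l" using uU vU vs(2) ws(2) by auto
  define A where "A j = vs j (\<gamma> j) * ws j (\<gamma> j)" for j
  define Bf where "Bf j = vs j (\<gamma> (Suc j)) * ws j (\<gamma> (Suc j))" for j
  have G1: "gint \<gamma> l (\<lambda>x. DD lam \<gamma> l u x * v x) = (\<Sum>j<l. integral {\<gamma> j..\<gamma> (Suc j)} (\<lambda>x. deriv (vs j) x * ws j x))
     + (\<Sum>j\<in>{1..<l}. (vs j (\<gamma> j) - vs (j - 1) (\<gamma> j)) * ((ws j (\<gamma> j) + ws (j - 1) (\<gamma> j)) / 2))"
    using side[OF fin uU' vU' cv(1) cv(2) cw(1)] unfolding vs(2) ws(2) BB_def .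
  have "gint \<gamma> l (\<lambda>x. u x * DD lam \<gamma> l v x) = BB (DD lam \<gamma> l v) u"
    unfolding BB_def by (simp add: mult.commute)
  then have G2: "gint \<gamma> l (\<lambda>x. u x * DD lam \<gamma> l v x) = (\<Sum>j<l. integral {\<gamma> j..\<gamma> (Suc j)} (\<lambda>x. deriv (ws j) x * vs j x))
     + (\<Sum>j\<in>{1..<l}. (ws j (\<gamma> j) - ws (j - 1) (\<gamma> j)) * ((vs j (\<gamma> j) + vs (j - 1) (\<gamma> j)) / 2))"
    using side[OF fin vU' uU' cw(1) cw(2) cv(1)] unfolding vs(2) ws(2) by simp
  have F: "(\<Sum>j<l. integral {\<gamma> j..\<gamma> (Suc j)} (\<lambda>x. deriv (vs j) x * ws j x)) + (\<Sum>j<l. integral {\<gamma> j..\<gamma> (Suc j)} (\<lambda>x. deriv (ws j) x * vs j x))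
      = (\<Sum>j<l. Bf j - A j)"
    unfolding sum.distrib[symmetric]
  proof (rule sum.cong[OF refl])
    fix j assume "j \<in> {..<l}"
    then have j: "j < l" by simp
    have "\<gamma> j \<le> \<gamma> (Suc j)" using gm[OF j] by simp
    then show "integral {\<gamma> j..\<gamma> (Suc j)} (\<lambda>x. deriv (vs j) x * ws j x) + integral {\<gamma> j..\<gamma> (Suc j)} (\<lambda>x. deriv (ws j) x * vs j x) = Bf j - A j"
      unfolding A_def Bf_def using ftc_prod[OF _ cv(3)[OF j] cw(3)[OF j] cv(1)[OF j] cv(2)[OF j] cw(1)[OF j] cw(2)[OF j]] by blast
  qed
  have J: "(\<Sum>j\<in>{1..<l}. (vs j (\<gamma> j) - vs (j - 1) (\<gamma> j)) * ((ws j (\<gamma> j) + ws (j - 1) (\<gamma> j)) / 2))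
      + (\<Sum>j\<in>{1..<l}. (ws j (\<gamma> j) - ws (j - 1) (\<gamma> j)) * ((vs j (\<gamma> j) + vs (j - 1) (\<gamma> j)) / 2))
      = (\<Sum>j\<in>{1..<l}. A j - Bf (j - 1))"
    unfolding sum.distrib[symmetric]
  proof (rule sum.cong[OF refl])
    fix j assume "j \<in> {1..<l}"
    then have s: "Suc (j - 1) = j" by auto
    show "(vs j (\<gamma> j) - vs (j - 1) (\<gamma> j)) * ((ws j (\<gamma> j) + ws (j - 1) (\<gamma> j)) / 2) +
         (ws j (\<gamma> j) - ws (j - 1) (\<gamma> j)) * ((vs j (\<gamma> j) + vs (j - 1) (\<gamma> j)) / 2) = A j - Bf (j - 1)"
      unfolding A_def Bf_def s by (simp add: field_simps)
  qed
  obtain m where m: "l = Suc m" using l0 by (cases l) auto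
  have T: "(\<Sum>j<l. Bf j - A j) + (\<Sum>j\<in>{1..<l}. A j - Bf (j - 1)) = Bf (l - 1) - A 0"
    unfolding m using tele[of Bf A m] by simp
  have ur: "uval \<gamma> l u (\<gamma> l) = vs (l - 1) (\<gamma> l)" unfolding vs(2) by (rule uval_right[OF l0 cv(1)])
  have vr: "uval \<gamma> l v (\<gamma> l) = ws (l - 1) (\<gamma> l)" unfolding ws(2) by (rule uval_right[OF l0 cw(1)])
  have ul: "uval \<gamma> l u (\<gamma> 0) = vs 0 (\<gamma> 0)" unfolding vs(2) by (rule uval_left[OF l0 cv(1)])
  have vl: "uval \<gamma> l v (\<gamma> 0) = ws 0 (\<gamma> 0)" unfolding ws(2) by (rule uval_left[OF l0 cw(1)])
  have BA: "Bf (l - 1) - A 0 = uval \<gamma> l u (\<gamma> l) * uval \<gamma> l v (\<gamma> l) - uval \<gamma> l u (\<gamma> 0) * uval \<gamma> l v (\<gamma> 0)"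
    unfolding ur vr ul vl A_def Bf_def using m by simp
  show ?thesis using G1 G2 F J T BA by linarith
qed

end


theorem mainTheorem10:
  fixes \<beta> \<eta> :: "idx \<Rightarrow> real" and \<gamma> :: "idx \<Rightarrow> nat \<Rightarrow> real" and l :: "idx \<Rightarrow> nat"
    and u v :: "idx \<Rightarrow> real \<Rightarrow> real"
  assumes "grid_ok \<beta> \<eta> \<gamma> l"
    and "eventually (\<lambda>a. u a \<in> UU a (\<gamma> a) (l a)) Lam"
    and "eventually (\<lambda>a. v a \<in> UU a (\<gamma> a) (l a)) Lam"
  shows "eventually (\<lambda>a.
     gint (\<gamma> a) (l a) (\<lambda>x. DD a (\<gamma> a) (l a) (u a) x * v a x) =
       - gint (\<gamma> a) (l a) (\<lambda>x. u a x * DD a (\<gamma> a) (l a) (v a) x)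
       + (uval (\<gamma> a) (l a) (u a) (\<beta> a) * uval (\<gamma> a) (l a) (v a) (\<beta> a)
          - uval (\<gamma> a) (l a) (u a) (- \<beta> a) * uval (\<gamma> a) (l a) (v a) (- \<beta> a))) Lam"
proof -
  have g: "eventually (\<lambda>a. \<gamma> a 0 = - \<beta> a \<and> \<gamma> a (l a) = \<beta> a \<and>
        (\<forall>j<l a. 0 < \<gamma> a (Suc j) - \<gamma> a j \<and> \<gamma> a (Suc j) - \<gamma> a j < \<eta> a)) Lam"
    using assms(1) unfolding grid_ok_def by (elim conjE)
  have "\<forall>n::nat. eventually (\<lambda>a. real n < \<beta> a) Lam"
    using assms(1) unfolding grid_ok_def by (elim conjE)
  then have b0: "eventually (\<lambda>a. real 0 < \<beta> a) Lam" by (rule spec)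
  have all: "eventually (\<lambda>a. finite a \<and> u a \<in> UU a (\<gamma> a) (l a) \<and> v a \<in> UU a (\<gamma> a) (l a) \<and>
      (\<gamma> a 0 = - \<beta> a \<and> \<gamma> a (l a) = \<beta> a \<and>
        (\<forall>j<l a. 0 < \<gamma> a (Suc j) - \<gamma> a j \<and> \<gamma> a (Suc j) - \<gamma> a j < \<eta> a)) \<and> real 0 < \<beta> a) Lam"
    by (intro eventually_conj Lam_finite assms(2) assms(3) g b0)
  show ?thesis
  proof (rule eventually_mono[OF all], elim conjE)
    fix a
    assume fin: "finite a" and uU: "u a \<in> UU a (\<gamma> a) (l a)" and vU: "v a \<in> UU a (\<gamma> a) (l a)"
      and g0: "\<gamma> a 0 = - \<beta> a" and gl: "\<gamma> a (l a) = \<beta> a"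
      and gs: "\<forall>j<l a. 0 < \<gamma> a (Suc j) - \<gamma> a j \<and> \<gamma> a (Suc j) - \<gamma> a j < \<eta> a"
      and bp: "real 0 < \<beta> a"
    have gr: "grid (\<gamma> a) (l a)" unfolding grid_def using gs by simp
    have l0: "0 < l a"
    proof (rule ccontr)
      assume "\<not> 0 < l a"
      then have "l a = 0" by simp
      then have "\<gamma> a 0 = \<gamma> a (l a)" by simp
      then show False using g0 gl bp by simp
    qed
    show "gint (\<gamma> a) (l a) (\<lambda>x. DD a (\<gamma> a) (l a) (u a) x * v a x) =
       - gint (\<gamma> a) (l a) (\<lambda>x. u a x * DD a (\<gamma> a) (l a) (v a) x)
       + (uval (\<gamma> a) (l a) (u a) (\<beta> a) * uval (\<gamma> a) (l a) (v a) (\<beta> a)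
          - uval (\<gamma> a) (l a) (u a) (- \<beta> a) * uval (\<gamma> a) (l a) (v a) (- \<beta> a))"
      using grid.main_pt[OF gr fin l0 uU vU] unfolding g0 gl .
  qed
qed


end
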